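(* Let $\rho$ be a valuation of a fixpoint context $\Theta$, let $(X:\sigma)\in\Theta$, and for $\varphi\in\mathcal{L}^s(\Theta;\tau)$ let $[\![X.\varphi]\!]\rho : \mathcal{P}([\![\sigma]\!]) \to \mathcal{P}([\![\tau]\!])$ be the map $S \mapsto [\![\varphi]\!]\rho[S/X]$. (1) If $\varphi \in \mathcal{L}^s(\Theta;\tau)$ for any $s\in\{\pm,+,-\}$, then $[\![X.\varphi]\!]\rho$ is monotone. (2) If $\varphi \in \mathcal{L}^+(\Theta;\tau)$, then $[\![X.\varphi]\!]\rho$ preserves directed unions. (3) If $\varphi\in\mathcal{L}^-(\Theta;\tau)$, then $[\![X.\varphi]\!]\rho$ preserves codirected intersections.
   Context: Pure types: closed types of $\tau ::= \mathbf{1} \mid \tau\times\tau \mid \tau\to\tau \mid \tau+\tau \mid \alpha \mid \mu\alpha.\tau$, interpreted as Scott domains: $[\![\mathbf{1}]\!]=\{\bot\le\top\}$; products componentwise with projections $\pi_1,\pi_2$; $[\![\tau\to\sigma]\!]$ = Scott-continuous functions with pointwise order; $[\![\tau_1+\tau_2]\!]$ = disjoint union with a new bottom, with injections $\mathrm{inj}_i$; $[\![\mu\alpha.\tau]\!]$ = canonical bilimit solution with inverse isomorphisms $\mathrm{fold}:[\![\tau[\mu\alpha.\tau/\alpha]]\!]\to[\![\mu\alpha.\tau]\!]$, $\mathrm{unfold}$. A family of sets is directed (resp. codirected) if nonempty and any two members are contained in (resp. contain) a common member. Iteration terms: $t ::= i \mid 0 \mid t+1$. Fixpoint contexts $\Theta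 = X_1:\sigma_1,\dots,X_n:\sigma_n$. For $s\in\{\pm,+,-\}$, $\mathcal{L}^s(\Theta;\tau)$ is generated by: $\mathrm{True},\mathrm{False}$; closure under $\wedge,\vee$; $\langle()\rangle\in\mathcal{L}^s(\Theta;\mathbf{1})$; $\langle\pi_i\rangle\varphi$ (type $\tau_1\times\tau_2$, $\varphi$ of type $\tau_i$); $\langle\mathrm{inj}_i\rangle\varphi$ (type $\tau_1+\tau_2$, $\varphi$ of type $\tau_i$); $\langle\mathrm{fold}\rangle\varphi$ (type $\mu\alpha.\tau$, $\varphi$ of type $\tau[\mu\alpha.\tau/\alpha]$); $X$ if $(X:\tau)\in\Theta$; weakening of $\Theta$; $(\mu^t X)\varphi,(\nu^t X)\varphi\in\mathcal{L}^s(\Theta;\tau)$ if $\varphi\in\mathcal{L}^s(\Theta,X:\tau;\tau)$; $(\exists i)\varphi\in\mathcal{L}^+(\Theta;\tau)$ if $\varphi\in\mathcal{L}^+(\Theta;\tau)$ and $i \mathrel{\mathrm{Pos}} \varphi$; $(\forall i)\varphi\in\mathcal{L}^-(\Theta;\tau)$ if $\varphi\in\mathcal{L}^-(\Theta;\tau)$ and $i\mathrel{\mathrm{Neg}}\varphi$; $\psi\Rightarrow\varphi\in\mathcal{L}^s(\,;\sigma\to\tau)$ if $\psi\in\mathcal{L}^{-s}(\,;\sigma)$ and $\varphi\in\mathcal{L}^s(\,;\tau)$, where $-\pm=\pm$, $-+=-$, $--=+$. Pos, Neg are inductively defined: $i\mathrel{\mathrm{Pos}}\varphi$ and $i\mathrel{\mathrm{Neg}}\varphi$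 hold if $i$ not free in $\varphi$; both preserved by $\wedge,\vee$ and the modalities; $i\mathrel{\mathrm{Pos}}(\psi\Rightarrow\varphi)$ if $i\mathrel{\mathrm{Neg}}\psi$ and $i\mathrel{\mathrm{Pos}}\varphi$; $i\mathrel{\mathrm{Neg}}(\psi\Rightarrow\varphi)$ if $i\mathrel{\mathrm{Pos}}\psi$ and $i\mathrel{\mathrm{Neg}}\varphi$; $i\mathrel{\mathrm{Pos}}(\exists j)\varphi$ if $i\mathrel{\mathrm{Pos}}\varphi$; $i\mathrel{\mathrm{Neg}}(\forall j)\varphi$ if $i\mathrel{\mathrm{Neg}}\varphi$; $i\mathrel{\mathrm{Pos}}(\mu^tX)\varphi$ if $i\mathrel{\mathrm{Pos}}\varphi$; $i\mathrel{\mathrm{Pos}}(\nu^tX)\varphi$ if $i\mathrel{\mathrm{Pos}}\varphi$ and $i$ not free in $t$; $i\mathrel{\mathrm{Neg}}(\nu^tX)\varphi$ if $i\mathrel{\mathrm{Neg}}\varphi$; $i\mathrel{\mathrm{Neg}}(\mu^tX)\varphi$ if $i\mathrel{\mathrm{Neg}}\varphi$ and $i$ not free in $t$. Semantics: a valuation $\rho$ of $\Theta$ maps each $(X:\sigma)\in\Theta$ to $\rho(X)\subseteq[\![\sigma]\!]$ and iteration variables to naturals. $[\![\mathrm{True}]\!]\rho=[\![\tau]\!]$, $[\![\mathrm{False}]\!]\rho=\emptyset$, $\wedge,\vee$ are $\cap,\cup$, $[\![X]\!]\rho=\rho(X)$, $[\![\langle()\rangle]\!]\rho=\{\top\}$,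 $[\![\langle\pi_i\rangle\varphi]\!]\rho=\{x\mid \pi_i(x)\in[\![\varphi]\!]\rho\}$, $[\![\langle\mathrm{inj}_i\rangle\varphi]\!]\rho=\{\mathrm{inj}_i(x)\mid x\in[\![\varphi]\!]\rho\}$, $[\![\langle\mathrm{fold}\rangle\varphi]\!]\rho=\{x\mid\mathrm{unfold}(x)\in[\![\varphi]\!]\rho\}$, $[\![\psi\Rightarrow\varphi]\!]\rho=\{f\mid\forall x\in[\![\psi]\!]\rho,\ f(x)\in[\![\varphi]\!]\rho\}$, $[\![(\exists i)\varphi]\!]\rho=\bigcup_{n}[\![\varphi]\!]\rho[n/i]$, $[\![(\forall i)\varphi]\!]\rho=\bigcap_{n}[\![\varphi]\!]\rho[n/i]$, and with $F(S)=[\![\varphi]\!]\rho[S/X]$, $n=[\![t]\!]\rho$: $[\![(\mu^tX)\varphi]\!]\rho=F^n(\emptyset)$, $[\![(\nu^tX)\varphi]\!]\rho=F^n([\![\tau]\!])$. *)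

theory Defs
  imports Main
begin

datatype ty = TUnit | TProd ty ty | TFun ty ty | TSum ty ty | TVar string | TMu string ty

fun tfv :: "ty \<Rightarrow> string set" where
  "tfv TUnit = {}"
| "tfv (TProd a b) = tfv a \<union> tfv b"
| "tfv (TFun a b) = tfv a \<union> tfv b"
| "tfv (TSum a b) = tfv a \<union> tfv b"
| "tfv (TVar x) = {x}"
| "tfv (TMu x a) = tfv a - {x}"

definition closed_ty :: "ty \<Rightarrow> bool" where
  "closed_ty t \<longleftrightarrow> tfv t = {}"

text \<open>Substitution of a (closed) type for a type variable; no capture can occur
  since only closed types are substituted.\<close>
fun tsubst :: "string \<Rightarrow> ty \<Rightarrow> ty \<Rightarrow> ty" where
  "tsubst x u TUnit = TUnit"
| "tsubst x u (TProd a b) = TProd (tsubst x u a) (tsubst x u b)"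
| "tsubst x u (TFun a b) = TFun (tsubst x u a) (tsubst x u b)"
| "tsubst x u (TSum a b) = TSum (tsubst x u a) (tsubst x u b)"
| "tsubst x u (TVar y) = (if x = y then u else TVar y)"
| "tsubst x u (TMu y a) = (if x = y then TMu y a else TMu y (tsubst x u a))"

text \<open>All type interpretations live in a common universe 'd. tdom gives the
  carrier of each type; the remaining fields are the semantic operations used by
  the logic (the top element of the unit type, projections, injections, unfold,
  application of a function element).\<close>

record 'd ty_interp =
  tdom :: "ty \<Rightarrow> 'd set"
  top_el :: 'd
  bot_el :: 'd
  proj_op :: "nat \<Rightarrow> 'd \<Rightarrow> 'd"
  inj_op :: "nat \<Rightarrow> 'd \<Rightarrow> 'd"
  fold_op :: "'d \<Rightarrow> 'd"
  unfold_op :: "'d \<Rightarrow> 'd"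
  app_op :: "'d \<Rightarrow> 'd \<Rightarrow> 'd"

text \<open>Basic structural properties enjoyed by the Scott-domain interpretation.\<close>
definition domain_model :: "'d ty_interp \<Rightarrow> bool" where
  "domain_model I \<longleftrightarrow>
     tdom I TUnit = {bot_el I, top_el I} \<and> bot_el I \<noteq> top_el I
   \<and> (\<forall>a b x. x \<in> tdom I (TProd a b) \<longrightarrow>
          proj_op I 1 x \<in> tdom I a \<and> proj_op I 2 x \<in> tdom I b)
   \<and> (\<forall>a b. inj_on (inj_op I 1) (tdom I a) \<and> inj_on (inj_op I 2) (tdom I b)
          \<and> inj_op I 1 ` tdom I a \<subseteq> tdom I (TSum a b)
          \<and> inj_op I 2 ` tdom I b \<subseteq> tdom I (TSum a b)
          \<and> inj_op I 1 ` tdom I a \<inter> inj_op I 2 ` tdom I b = {})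
   \<and> (\<forall>a b f x. f \<in> tdom I (TFun a b) \<longrightarrow> x \<in> tdom I a \<longrightarrow> app_op I f x \<in> tdom I b)
   \<and> (\<forall>x t. bij_betw (unfold_op I) (tdom I (TMu x t)) (tdom I (tsubst x (TMu x t) t))
          \<and> (\<forall>y \<in> tdom I (TMu x t). fold_op I (unfold_op I y) = y)
          \<and> (\<forall>z \<in> tdom I (tsubst x (TMu x t) t). unfold_op I (fold_op I z) = z))"

datatype iterm = IVar string | IZero | ISuc iterm

fun ifv :: "iterm \<Rightarrow> string set" where
  "ifv (IVar i) = {i}" | "ifv IZero = {}" | "ifv (ISuc t) = ifv t"

fun ieval :: "(string \<Rightarrow> nat) \<Rightarrow> iterm \<Rightarrow> nat" where
  "ieval N (IVar i) = N i" | "ieval N IZero = 0" | "ieval N (ISuc t) = Suc (ieval N t)"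

datatype form =
    FTrue | FFalse
  | FAnd form form | FOr form form
  | FUnit
  | FProj nat form                 (* <pi_i> phi, i in {1,2} *)
  | FInj nat form                  (* <inj_i> phi, i in {1,2} *)
  | FFold form
  | FVar string
  | FMu iterm string form
  | FNu iterm string form
  | FEx string form
  | FAll string form
  | FImp form form

fun fiv :: "form \<Rightarrow> string set" where
  "fiv FTrue = {}" | "fiv FFalse = {}"
| "fiv (FAnd a b) = fiv a \<union> fiv b" | "fiv (FOr a b) = fiv a \<union> fiv b"
| "fiv FUnit = {}"
| "fiv (FProj i a) = fiv a" | "fiv (FInj i a) = fiv a" | "fiv (FFold a) = fiv a"
| "fiv (FVar X) = {}"
| "fiv (FMu t X a) = ifv t \<union> fiv a" | "fiv (FNu t X a) = ifv t \<union> fiv a"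
| "fiv (FEx i a) = fiv a - {i}" | "fiv (FAll i a) = fiv a - {i}"
| "fiv (FImp a b) = fiv a \<union> fiv b"

inductive Pos :: "string \<Rightarrow> form \<Rightarrow> bool" and Neg :: "string \<Rightarrow> form \<Rightarrow> bool" where
  Pos_nf: "i \<notin> fiv a \<Longrightarrow> Pos i a"
| Neg_nf: "i \<notin> fiv a \<Longrightarrow> Neg i a"
| Pos_and: "Pos i a \<Longrightarrow> Pos i b \<Longrightarrow> Pos i (FAnd a b)"
| Neg_and: "Neg i a \<Longrightarrow> Neg i b \<Longrightarrow> Neg i (FAnd a b)"
| Pos_or: "Pos i a \<Longrightarrow> Pos i b \<Longrightarrow> Pos i (FOr a b)"
| Neg_or: "Neg i a \<Longrightarrow> Neg i b \<Longrightarrow> Neg i (FOr a b)"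
| Pos_proj: "Pos i a \<Longrightarrow> Pos i (FProj k a)"
| Neg_proj: "Neg i a \<Longrightarrow> Neg i (FProj k a)"
| Pos_inj: "Pos i a \<Longrightarrow> Pos i (FInj k a)"
| Neg_inj: "Neg i a \<Longrightarrow> Neg i (FInj k a)"
| Pos_fold: "Pos i a \<Longrightarrow> Pos i (FFold a)"
| Neg_fold: "Neg i a \<Longrightarrow> Neg i (FFold a)"
| Pos_imp: "Neg i a \<Longrightarrow> Pos i b \<Longrightarrow> Pos i (FImp a b)"
| Neg_imp: "Pos i a \<Longrightarrow> Neg i b \<Longrightarrow> Neg i (FImp a b)"
| Pos_ex: "Pos i a \<Longrightarrow> Pos i (FEx j a)"
| Neg_all: "Neg i a \<Longrightarrow> Neg i (FAll j a)"
| Pos_mu: "Pos i a \<Longrightarrow> Pos i (FMu t X a)"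
| Pos_nu: "Pos i a \<Longrightarrow> i \<notin> ifv t \<Longrightarrow> Pos i (FNu t X a)"
| Neg_nu: "Neg i a \<Longrightarrow> Neg i (FNu t X a)"
| Neg_mu: "Neg i a \<Longrightarrow> i \<notin> ifv t \<Longrightarrow> Neg i (FMu t X a)"

text \<open>Polarities s in {+-, +, -}.\<close>
datatype sgn = SPM | SPlus | SMinus

fun neg_sgn :: "sgn \<Rightarrow> sgn" where
  "neg_sgn SPM = SPM" | "neg_sgn SPlus = SMinus" | "neg_sgn SMinus = SPlus"

text \<open>Fixpoint contexts are finite partial maps from fixpoint variables to types.
  L s Theta phi tau  means  phi \<in> L^s(Theta; tau).\<close>
type_synonym fctx = "string \<rightharpoonup> ty"

inductive L :: "sgn \<Rightarrow> fctx \<Rightarrow> form \<Rightarrow> ty \<Rightarrow> bool" where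
  L_true: "L s \<Theta> FTrue \<tau>"
| L_false: "L s \<Theta> FFalse \<tau>"
| L_and: "L s \<Theta> a \<tau> \<Longrightarrow> L s \<Theta> b \<tau> \<Longrightarrow> L s \<Theta> (FAnd a b) \<tau>"
| L_or: "L s \<Theta> a \<tau> \<Longrightarrow> L s \<Theta> b \<tau> \<Longrightarrow> L s \<Theta> (FOr a b) \<tau>"
| L_unit: "L s \<Theta> FUnit TUnit"
| L_proj1: "L s \<Theta> a \<tau>1 \<Longrightarrow> L s \<Theta> (FProj 1 a) (TProd \<tau>1 \<tau>2)"
| L_proj2: "L s \<Theta> a \<tau>2 \<Longrightarrow> L s \<Theta> (FProj 2 a) (TProd \<tau>1 \<tau>2)"
| L_inj1: "L s \<Theta> a \<tau>1 \<Longrightarrow> L s \<Theta> (FInj 1 a) (TSum \<tau>1 \<tau>2)"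
| L_inj2: "L s \<Theta> a \<tau>2 \<Longrightarrow> L s \<Theta> (FInj 2 a) (TSum \<tau>1 \<tau>2)"
| L_fold: "L s \<Theta> a (tsubst \<alpha> (TMu \<alpha> \<tau>) \<tau>) \<Longrightarrow> L s \<Theta> (FFold a) (TMu \<alpha> \<tau>)"
| L_var: "\<Theta> X = Some \<tau> \<Longrightarrow> L s \<Theta> (FVar X) \<tau>"
| L_weak: "L s \<Theta> a \<tau> \<Longrightarrow> \<Theta> \<subseteq>\<^sub>m \<Theta>' \<Longrightarrow> L s \<Theta>' a \<tau>"
| L_mu: "L s (\<Theta>(X \<mapsto> \<tau>)) a \<tau> \<Longrightarrow> L s \<Theta> (FMu t X a) \<tau>"
| L_nu: "L s (\<Theta>(X \<mapsto> \<tau>)) a \<tau> \<Longrightarrow> L s \<Theta> (FNu t X a) \<tau>"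
| L_ex: "L SPlus \<Theta> a \<tau> \<Longrightarrow> Pos i a \<Longrightarrow> L SPlus \<Theta> (FEx i a) \<tau>"
| L_all: "L SMinus \<Theta> a \<tau> \<Longrightarrow> Neg i a \<Longrightarrow> L SMinus \<Theta> (FAll i a) \<tau>"
| L_imp: "L (neg_sgn s) Map.empty b \<sigma> \<Longrightarrow> L s Map.empty a \<tau> \<Longrightarrow>
            L s Map.empty (FImp b a) (TFun \<sigma> \<tau>)"

text \<open>sem I V N phi tau: the interpretation of phi at type tau under the valuation
  (V for fixpoint variables, N for iteration variables).\<close>
fun sem :: "'d ty_interp \<Rightarrow> (string \<Rightarrow> 'd set) \<Rightarrow> (string \<Rightarrow> nat) \<Rightarrow> form \<Rightarrow> ty \<Rightarrow> 'd set" where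
  "sem I V N FTrue \<tau> = tdom I \<tau>"
| "sem I V N FFalse \<tau> = {}"
| "sem I V N (FAnd a b) \<tau> = sem I V N a \<tau> \<inter> sem I V N b \<tau>"
| "sem I V N (FOr a b) \<tau> = sem I V N a \<tau> \<union> sem I V N b \<tau>"
| "sem I V N FUnit \<tau> = {top_el I}"
| "sem I V N (FProj k a) \<tau> = (case \<tau> of
      TProd \<tau>1 \<tau>2 \<Rightarrow> {x \<in> tdom I \<tau>. proj_op I k x \<in> sem I V N a (if k = 1 then \<tau>1 else \<tau>2)}
    | _ \<Rightarrow> {})"
| "sem I V N (FInj k a) \<tau> = (case \<tau> of
      TSum \<tau>1 \<tau>2 \<Rightarrow> inj_op I k ` sem I V N a (if k = 1 then \<tau>1 else \<tau>2)
    | _ \<Rightarrow> {})"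
| "sem I V N (FFold a) \<tau> = (case \<tau> of
      TMu \<alpha> \<tau>' \<Rightarrow> {x \<in> tdom I \<tau>. unfold_op I x \<in> sem I V N a (tsubst \<alpha> (TMu \<alpha> \<tau>') \<tau>')}
    | _ \<Rightarrow> {})"
| "sem I V N (FVar X) \<tau> = V X"
| "sem I V N (FMu t X a) \<tau> = ((\<lambda>S. sem I (V(X := S)) N a \<tau>) ^^ ieval N t) {}"
| "sem I V N (FNu t X a) \<tau> = ((\<lambda>S. sem I (V(X := S)) N a \<tau>) ^^ ieval N t) (tdom I \<tau>)"
| "sem I V N (FEx i a) \<tau> = (\<Union>n. sem I V (N(i := n)) a \<tau>)"
| "sem I V N (FAll i a) \<tau> = (\<Inter>n. sem I V (N(i := n)) a \<tau>)"
| "sem I V N (FImp b a) \<tau> = (case \<tau> of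
      TFun \<sigma> \<tau>' \<Rightarrow> {f \<in> tdom I \<tau>. \<forall>x \<in> sem I V N b \<sigma>. app_op I f x \<in> sem I V N a \<tau>'}
    | _ \<Rightarrow> {})"

definition valuation :: "'d ty_interp \<Rightarrow> fctx \<Rightarrow> (string \<Rightarrow> 'd set) \<Rightarrow> bool" where
  "valuation I \<Theta> V \<longleftrightarrow> (\<forall>Y \<sigma>. \<Theta> Y = Some \<sigma> \<longrightarrow> V Y \<subseteq> tdom I \<sigma>)"

definition directed_family :: "'a set set \<Rightarrow> bool" where
  "directed_family D \<longleftrightarrow> D \<noteq> {} \<and> (\<forall>A\<in>D. \<forall>B\<in>D. \<exists>C\<in>D. A \<subseteq> C \<and> B \<subseteq> C)"

definition codirected_family :: "'a set set \<Rightarrow> bool" where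
  "codirected_family D \<longleftrightarrow> D \<noteq> {} \<and> (\<forall>A\<in>D. \<forall>B\<in>D. \<exists>C\<in>D. C \<subseteq> A \<and> C \<subseteq> B)"

end

theory Submission
  imports Defs
begin

lemma iter_mono_gen:
  fixes f g :: "'a set \<Rightarrow> 'a set" and n :: nat
  assumes "\<And>S T. S \<subseteq> T \<Longrightarrow> f S \<subseteq> g T" "S0 \<subseteq> T0"
  shows "(f ^^ n) S0 \<subseteq> (g ^^ n) T0"
proof (induction n)
  case 0
  then show ?case using assms(2) by simp
next
  case (Suc n)
  then show ?case using assms(1) by simp
qed

lemma sem_mono:
  assumes "L s \<Theta> \<phi> \<tau>"
  shows "(\<forall>Y \<tau>'. \<Theta> Y = Some \<tau>' \<longrightarrow> V Y \<subseteq> V' Y) \<Longrightarrow> sem I V N \<phi> \<tau> \<subseteq> sem I V' N \<phi> \<tau>"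
  using assms
proof (induction arbitrary: V V' N rule: L.induct)
  case (L_and s \<Theta> a \<tau> b)
  show ?case using L_and.IH(1)[OF L_and.prems, of N] L_and.IH(2)[OF L_and.prems, of N] by auto
next
  case (L_or s \<Theta> a \<tau> b)
  show ?case using L_or.IH(1)[OF L_or.prems, of N] L_or.IH(2)[OF L_or.prems, of N] by auto
next
  case (L_proj1 s \<Theta> a \<tau>1 \<tau>2)
  show ?case using L_proj1.IH[OF L_proj1.prems, of N] by auto
next
  case (L_proj2 s \<Theta> a \<tau>2 \<tau>1)
  show ?case using L_proj2.IH[OF L_proj2.prems, of N] by auto
next
  case (L_inj1 s \<Theta> a \<tau>1 \<tau>2)
  show ?case using L_inj1.IH[OF L_inj1.prems, of N] by auto
next
  case (L_inj2 s \<Theta> a \<tau>2 \<tau>1)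
  show ?case using L_inj2.IH[OF L_inj2.prems, of N] by auto
next
  case (L_fold s \<Theta> a \<alpha> \<tau>)
  show ?case using L_fold.IH[OF L_fold.prems, of N] by auto
next
  case (L_var \<Theta> X \<tau> s)
  show ?case using L_var.prems L_var.hyps by simp
next
  case (L_weak s \<Theta> a \<tau> \<Theta>')
  have "\<forall>Y \<tau>'. \<Theta> Y = Some \<tau>' \<longrightarrow> V Y \<subseteq> V' Y"
  proof (intro allI impI)
    fix Y \<tau>' assume "\<Theta> Y = Some \<tau>'"
    then have "\<Theta>' Y = Some \<tau>'" using L_weak.hyps(2) unfolding map_le_def by (metis domI)
    then show "V Y \<subseteq> V' Y" using L_weak.prems by blast
  qed
  then show ?case using L_weak.IH by blast
next
  case (L_mu s \<Theta> X \<tau> a t)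
  have "((\<lambda>S. sem I (V(X := S)) N a \<tau>) ^^ n) S0 \<subseteq> ((\<lambda>S. sem I (V'(X := S)) N a \<tau>) ^^ n) T0"
    if "S0 \<subseteq> T0" for n S0 T0
  proof (rule iter_mono_gen[OF _ that])
    fix S T :: "'a set" assume ST: "S \<subseteq> T"
    have "\<forall>Y \<tau>'. (\<Theta>(X \<mapsto> \<tau>)) Y = Some \<tau>' \<longrightarrow> (V(X := S)) Y \<subseteq> (V'(X := T)) Y"
      using L_mu.prems ST by simp
    then show "sem I (V(X := S)) N a \<tau> \<subseteq> sem I (V'(X := T)) N a \<tau>" by (rule L_mu.IH)
  qed
  then show ?case by simp
next
  case (L_nu s \<Theta> X \<tau> a t)
  have "((\<lambda>S. sem I (V(X := S)) N a \<tau>) ^^ n) S0 \<subseteq> ((\<lambda>S. sem I (V'(X := S)) N a \<tau>) ^^ n) T0"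
    if "S0 \<subseteq> T0" for n S0 T0
  proof (rule iter_mono_gen[OF _ that])
    fix S T :: "'a set" assume ST: "S \<subseteq> T"
    have "\<forall>Y \<tau>'. (\<Theta>(X \<mapsto> \<tau>)) Y = Some \<tau>' \<longrightarrow> (V(X := S)) Y \<subseteq> (V'(X := T)) Y"
      using L_nu.prems ST by simp
    then show "sem I (V(X := S)) N a \<tau> \<subseteq> sem I (V'(X := T)) N a \<tau>" by (rule L_nu.IH)
  qed
  then show ?case by simp
next
  case (L_ex \<Theta> a \<tau> i)
  have "\<And>n. sem I V (N(i := n)) a \<tau> \<subseteq> sem I V' (N(i := n)) a \<tau>"
    using L_ex.IH[OF L_ex.prems] by blast
  then show ?case by auto
next
  case (L_all \<Theta> a \<tau> i)
  have "\<And>n. sem I V (N(i := n)) a \<tau> \<subseteq> sem I V' (N(i := n)) a \<tau>"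
    using L_all.IH[OF L_all.prems] by blast
  then show ?case by auto
next
  case (L_imp s b \<sigma> a \<tau>)
  have "sem I V N b \<sigma> = sem I V' N b \<sigma>"
    using L_imp.IH(1)[of V V' N] L_imp.IH(1)[of V' V N] by auto
  then show ?case using L_imp.IH(2)[of V V' N] by auto
qed auto

lemma sem_const:
  assumes "L s Map.empty \<phi> \<tau>"
  shows "sem I V N \<phi> \<tau> = sem I V' N \<phi> \<tau>"
  using sem_mono[OF assms, of V V' I N] sem_mono[OF assms, of V' V I N] by auto

lemma sem_sub:
  assumes "L s \<Theta> \<phi> \<tau>" and model: "domain_model I"
  shows "valuation I \<Theta> V \<Longrightarrow> sem I V N \<phi> \<tau> \<subseteq> tdom I \<tau>"
  using assms(1)
proof (induction arbitrary: V N rule: L.induct)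
  case (L_unit s \<Theta>)
  show ?case using model by (auto simp: domain_model_def)
next
  case (L_and s \<Theta> a \<tau> b)
  show ?case using L_and.IH(1)[OF L_and.prems, of N] by auto
next
  case (L_or s \<Theta> a \<tau> b)
  show ?case using L_or.IH(1)[OF L_or.prems, of N] L_or.IH(2)[OF L_or.prems, of N] by auto
next
  case (L_proj1 s \<Theta> a \<tau>1 \<tau>2)
  show ?case by auto
next
  case (L_proj2 s \<Theta> a \<tau>2 \<tau>1)
  show ?case by auto
next
  case (L_inj1 s \<Theta> a \<tau>1 \<tau>2)
  have "inj_op I 1 ` tdom I \<tau>1 \<subseteq> tdom I (TSum \<tau>1 \<tau>2)" using model unfolding domain_model_def by blast
  then show ?case using L_inj1.IH[OF L_inj1.prems, of N] by auto
next
  case (L_inj2 s \<Theta> a \<tau>2 \<tau>1)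
  have "inj_op I 2 ` tdom I \<tau>2 \<subseteq> tdom I (TSum \<tau>1 \<tau>2)" using model unfolding domain_model_def by blast
  then show ?case using L_inj2.IH[OF L_inj2.prems, of N] by auto
next
  case (L_fold s \<Theta> a \<alpha> \<tau>)
  show ?case by auto
next
  case (L_var \<Theta> X \<tau> s)
  show ?case using L_var.prems L_var.hyps by (auto simp: valuation_def)
next
  case (L_weak s \<Theta> a \<tau> \<Theta>')
  have "valuation I \<Theta> V"
    unfolding valuation_def
  proof (intro allI impI)
    fix Y \<tau>' assume "\<Theta> Y = Some \<tau>'"
    then have "\<Theta>' Y = Some \<tau>'" using L_weak.hyps(2) unfolding map_le_def by (metis domI)
    then show "V Y \<subseteq> tdom I \<tau>'" using L_weak.prems unfolding valuation_def by blast
  qed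
  then show ?case using L_weak.IH by blast
next
  case (L_mu s \<Theta> X \<tau> a t)
  have "((\<lambda>S. sem I (V(X := S)) N a \<tau>) ^^ n) {} \<subseteq> tdom I \<tau>" for n
  proof (induction n)
    case (Suc n)
    have "valuation I (\<Theta>(X \<mapsto> \<tau>)) (V(X := ((\<lambda>S. sem I (V(X := S)) N a \<tau>) ^^ n) {}))"
      using Suc.IH L_mu.prems unfolding valuation_def by (auto simp del: fun_upd_apply simp: fun_upd_def)
    then show ?case unfolding funpow.simps comp_def by (rule L_mu.IH)
  qed simp
  then show ?case by simp
next
  case (L_nu s \<Theta> X \<tau> a t)
  have "((\<lambda>S. sem I (V(X := S)) N a \<tau>) ^^ n) (tdom I \<tau>) \<subseteq> tdom I \<tau>" for n
  proof (induction n)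
    case (Suc n)
    have "valuation I (\<Theta>(X \<mapsto> \<tau>)) (V(X := ((\<lambda>S. sem I (V(X := S)) N a \<tau>) ^^ n) (tdom I \<tau>)))"
      using Suc.IH L_nu.prems unfolding valuation_def by (auto simp del: fun_upd_apply simp: fun_upd_def)
    then show ?case unfolding funpow.simps comp_def by (rule L_nu.IH)
  qed simp
  then show ?case by simp
next
  case (L_ex \<Theta> a \<tau> i)
  have "\<And>n. sem I V (N(i := n)) a \<tau> \<subseteq> tdom I \<tau>"
    using L_ex.IH[OF L_ex.prems] by blast
  then show ?case by auto
next
  case (L_all \<Theta> a \<tau> i)
  have "\<And>n. sem I V (N(i := n)) a \<tau> \<subseteq> tdom I \<tau>"
    using L_all.IH[OF L_all.prems] by blast
  then show ?case by auto
qed auto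

definition dirv :: "fctx \<Rightarrow> 'i set \<Rightarrow> ('i \<Rightarrow> string \<Rightarrow> 'd set) \<Rightarrow> bool" where
  "dirv \<Theta> D Vs \<longleftrightarrow> (\<forall>i\<in>D. \<forall>j\<in>D. \<exists>k\<in>D. \<forall>Y \<tau>'. \<Theta> Y = Some \<tau>' \<longrightarrow>
      Vs i Y \<subseteq> Vs k Y \<and> Vs j Y \<subseteq> Vs k Y)"

definition codirv :: "fctx \<Rightarrow> 'i set \<Rightarrow> ('i \<Rightarrow> string \<Rightarrow> 'd set) \<Rightarrow> bool" where
  "codirv \<Theta> D Vs \<longleftrightarrow> (\<forall>i\<in>D. \<forall>j\<in>D. \<exists>k\<in>D. \<forall>Y \<tau>'. \<Theta> Y = Some \<tau>' \<longrightarrow>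
      Vs k Y \<subseteq> Vs i Y \<and> Vs k Y \<subseteq> Vs j Y)"

lemma dirv_weak: "dirv \<Theta>' D Vs \<Longrightarrow> \<Theta> \<subseteq>\<^sub>m \<Theta>' \<Longrightarrow> dirv \<Theta> D Vs"
  unfolding dirv_def map_le_def by (metis domI)

lemma codirv_weak: "codirv \<Theta>' D Vs \<Longrightarrow> \<Theta> \<subseteq>\<^sub>m \<Theta>' \<Longrightarrow> codirv \<Theta> D Vs"
  unfolding codirv_def map_le_def by (metis domI)

lemma sem_dir:
  fixes Vs :: "'i \<Rightarrow> string \<Rightarrow> 'd set"
  assumes "L s \<Theta> \<phi> \<tau>" and ne: "D \<noteq> {}"
  shows "s = SPlus \<Longrightarrow> dirv \<Theta> D Vs \<Longrightarrow>
    (\<forall>Y \<tau>'. \<Theta> Y = Some \<tau>' \<longrightarrow> U Y = (\<Union>i\<in>D. Vs i Y)) \<Longrightarrow>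
    sem I U N \<phi> \<tau> = (\<Union>i\<in>D. sem I (Vs i) N \<phi> \<tau>)"
  using assms(1)
proof (induction arbitrary: Vs U N rule: L.induct)
  case (L_true s \<Theta> \<tau>)
  then show ?case using ne by simp
next
  case (L_false s \<Theta> \<tau>)
  then show ?case by simp
next
  case (L_and s \<Theta> a \<tau> b)
  have A: "sem I U N a \<tau> = (\<Union>i\<in>D. sem I (Vs i) N a \<tau>)" and B: "sem I U N b \<tau> = (\<Union>i\<in>D. sem I (Vs i) N b \<tau>)"
    using L_and.IH(1)[OF L_and.prems] L_and.IH(2)[OF L_and.prems] by auto
  show ?case
  proof
    show "sem I U N (FAnd a b) \<tau> \<subseteq> (\<Union>i\<in>D. sem I (Vs i) N (FAnd a b) \<tau>)"
    proof
      fix x assume "x \<in> sem I U N (FAnd a b) \<tau>"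
      then have "x \<in> (\<Union>i\<in>D. sem I (Vs i) N a \<tau>)" "x \<in> (\<Union>i\<in>D. sem I (Vs i) N b \<tau>)"
        unfolding A[symmetric] B[symmetric] by simp_all
      then obtain i j where ij: "i \<in> D" "j \<in> D" "x \<in> sem I (Vs i) N a \<tau>" "x \<in> sem I (Vs j) N b \<tau>"
        by blast
      then obtain k where k: "k \<in> D" "\<forall>Y \<tau>'. \<Theta> Y = Some \<tau>' \<longrightarrow> Vs i Y \<subseteq> Vs k Y \<and> Vs j Y \<subseteq> Vs k Y"
        using L_and.prems(2) unfolding dirv_def by blast
      have "x \<in> sem I (Vs k) N a \<tau>" using sem_mono[OF L_and.hyps(1), of "Vs i" "Vs k"] k ij by blast
      moreover have "x \<in> sem I (Vs k) N b \<tau>" using sem_mono[OF L_and.hyps(2), of "Vs j" "Vs k"] k ij by blast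
      ultimately show "x \<in> (\<Union>i\<in>D. sem I (Vs i) N (FAnd a b) \<tau>)" using k by auto
    qed
    show "(\<Union>i\<in>D. sem I (Vs i) N (FAnd a b) \<tau>) \<subseteq> sem I U N (FAnd a b) \<tau>"
      using A B by auto
  qed
next
  case (L_or s \<Theta> a \<tau> b)
  show ?case using L_or.IH(1)[OF L_or.prems] L_or.IH(2)[OF L_or.prems] by auto
next
  case (L_unit s \<Theta>)
  then show ?case using ne by simp
next
  case (L_proj1 s \<Theta> a \<tau>1 \<tau>2)
  show ?case using L_proj1.IH[OF L_proj1.prems] by auto
next
  case (L_proj2 s \<Theta> a \<tau>2 \<tau>1)
  show ?case using L_proj2.IH[OF L_proj2.prems] by auto
next
  case (L_inj1 s \<Theta> a \<tau>1 \<tau>2)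
  show ?case using L_inj1.IH[OF L_inj1.prems] by auto
next
  case (L_inj2 s \<Theta> a \<tau>2 \<tau>1)
  show ?case using L_inj2.IH[OF L_inj2.prems] by auto
next
  case (L_fold s \<Theta> a \<alpha> \<tau>)
  show ?case using L_fold.IH[OF L_fold.prems] by auto
next
  case (L_var \<Theta> X \<tau> s)
  then show ?case by auto
next
  case (L_weak s \<Theta> a \<tau> \<Theta>')
  have d: "dirv \<Theta> D Vs" using dirv_weak L_weak.prems(2) L_weak.hyps(2) by blast
  have u: "\<forall>Y \<tau>'. \<Theta> Y = Some \<tau>' \<longrightarrow> U Y = (\<Union>j\<in>D. Vs j Y)"
  proof (intro allI impI)
    fix Y \<tau>' assume "\<Theta> Y = Some \<tau>'"
    then have "\<Theta>' Y = Some \<tau>'" using L_weak.hyps(2) unfolding map_le_def by (metis domI)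
    then show "U Y = (\<Union>j\<in>D. Vs j Y)" using L_weak.prems(3) by blast
  qed
  show ?case by (rule L_weak.IH[OF L_weak.prems(1) d u])
next
  case (L_mu s \<Theta> X \<tau> a t)
  define F where "F i n = ((\<lambda>S. sem I ((Vs i)(X := S)) N a \<tau>) ^^ n) {}" for i n
  define G where "G n = ((\<lambda>S. sem I (U(X := S)) N a \<tau>) ^^ n) {}" for n
  have Fm: "F i n \<subseteq> F k n" if "\<forall>Y \<tau>'. \<Theta> Y = Some \<tau>' \<longrightarrow> Vs i Y \<subseteq> Vs k Y" for i k n
    unfolding F_def
  proof (rule iter_mono_gen)
    fix S T :: "'d set" assume ST: "S \<subseteq> T"
    have "\<forall>Y \<tau>'. (\<Theta>(X \<mapsto> \<tau>)) Y = Some \<tau>' \<longrightarrow> ((Vs i)(X := S)) Y \<subseteq> ((Vs k)(X := T)) Y"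
      using that ST by simp
    then show "sem I ((Vs i)(X := S)) N a \<tau> \<subseteq> sem I ((Vs k)(X := T)) N a \<tau>"
      by (rule sem_mono[OF L_mu.hyps])
  qed simp
  have "G n = (\<Union>i\<in>D. F i n)" for n
  proof (induction n)
    case 0
    then show ?case by (simp add: F_def G_def)
  next
    case (Suc n)
    have "G (Suc n) = sem I (U(X := G n)) N a \<tau>" by (simp add: G_def)
    also have "\<dots> = (\<Union>i\<in>D. sem I ((Vs i)(X := F i n)) N a \<tau>)"
    proof -
      have d: "dirv (\<Theta>(X \<mapsto> \<tau>)) D (\<lambda>i. (Vs i)(X := F i n))"
        unfolding dirv_def
      proof (intro ballI)
        fix i j assume "i \<in> D" "j \<in> D"
        then obtain k where k: "k \<in> D" "\<forall>Y \<tau>'. \<Theta> Y = Some \<tau>' \<longrightarrow> Vs i Y \<subseteq> Vs k Y \<and> Vs j Y \<subseteq> Vs k Y"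
          using L_mu.prems(2) unfolding dirv_def by blast
        have "\<forall>Y \<tau>'. \<Theta> Y = Some \<tau>' \<longrightarrow> Vs i Y \<subseteq> Vs k Y" "\<forall>Y \<tau>'. \<Theta> Y = Some \<tau>' \<longrightarrow> Vs j Y \<subseteq> Vs k Y"
          using k(2) by blast+
        then have "F i n \<subseteq> F k n" "F j n \<subseteq> F k n" using Fm by blast+
        then show "\<exists>k\<in>D. \<forall>Y \<tau>'. (\<Theta>(X \<mapsto> \<tau>)) Y = Some \<tau>' \<longrightarrow>
           ((Vs i)(X := F i n)) Y \<subseteq> ((Vs k)(X := F k n)) Y \<and> ((Vs j)(X := F j n)) Y \<subseteq> ((Vs k)(X := F k n)) Y"
          using k by (intro bexI[where x=k]) auto
      qed
      have u: "\<forall>Y \<tau>'. (\<Theta>(X \<mapsto> \<tau>)) Y = Some \<tau>' \<longrightarrow> (U(X := G n)) Y = (\<Union>i\<in>D. ((Vs i)(X := F i n)) Y)"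
      proof (intro allI impI)
        fix Y \<tau>' assume Y: "(\<Theta>(X \<mapsto> \<tau>)) Y = Some \<tau>'"
        show "(U(X := G n)) Y = (\<Union>i\<in>D. ((Vs i)(X := F i n)) Y)"
        proof (cases "Y = X")
          case True
          then show ?thesis using Suc.IH by simp
        next
          case False
          then have "\<Theta> Y = Some \<tau>'" using Y by simp
          then show ?thesis using False L_mu.prems(3) by simp
        qed
      qed
      show ?thesis using L_mu.IH[OF L_mu.prems(1) d u] .
    qed
    also have "\<dots> = (\<Union>i\<in>D. F i (Suc n))" by (simp add: F_def)
    finally show ?case .
  qed
  then show ?case by (simp add: F_def G_def)
next
  case (L_nu s \<Theta> X \<tau> a t)
  define F where "F i n = ((\<lambda>S. sem I ((Vs i)(X := S)) N a \<tau>) ^^ n) (tdom I \<tau>)" for i n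
  define G where "G n = ((\<lambda>S. sem I (U(X := S)) N a \<tau>) ^^ n) (tdom I \<tau>)" for n
  have Fm: "F i n \<subseteq> F k n" if "\<forall>Y \<tau>'. \<Theta> Y = Some \<tau>' \<longrightarrow> Vs i Y \<subseteq> Vs k Y" for i k n
    unfolding F_def
  proof (rule iter_mono_gen)
    fix S T :: "'d set" assume ST: "S \<subseteq> T"
    have "\<forall>Y \<tau>'. (\<Theta>(X \<mapsto> \<tau>)) Y = Some \<tau>' \<longrightarrow> ((Vs i)(X := S)) Y \<subseteq> ((Vs k)(X := T)) Y"
      using that ST by simp
    then show "sem I ((Vs i)(X := S)) N a \<tau> \<subseteq> sem I ((Vs k)(X := T)) N a \<tau>"
      by (rule sem_mono[OF L_nu.hyps])
  qed simp
  have "G n = (\<Union>i\<in>D. F i n)" for n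
  proof (induction n)
    case 0
    then show ?case using ne by (simp add: F_def G_def)
  next
    case (Suc n)
    have "G (Suc n) = sem I (U(X := G n)) N a \<tau>" by (simp add: G_def)
    also have "\<dots> = (\<Union>i\<in>D. sem I ((Vs i)(X := F i n)) N a \<tau>)"
    proof -
      have d: "dirv (\<Theta>(X \<mapsto> \<tau>)) D (\<lambda>i. (Vs i)(X := F i n))"
        unfolding dirv_def
      proof (intro ballI)
        fix i j assume "i \<in> D" "j \<in> D"
        then obtain k where k: "k \<in> D" "\<forall>Y \<tau>'. \<Theta> Y = Some \<tau>' \<longrightarrow> Vs i Y \<subseteq> Vs k Y \<and> Vs j Y \<subseteq> Vs k Y"
          using L_nu.prems(2) unfolding dirv_def by blast
        have "\<forall>Y \<tau>'. \<Theta> Y = Some \<tau>' \<longrightarrow> Vs i Y \<subseteq> Vs k Y" "\<forall>Y \<tau>'. \<Theta> Y = Some \<tau>' \<longrightarrow> Vs j Y \<subseteq> Vs k Y"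
          using k(2) by blast+
        then have "F i n \<subseteq> F k n" "F j n \<subseteq> F k n" using Fm by blast+
        then show "\<exists>k\<in>D. \<forall>Y \<tau>'. (\<Theta>(X \<mapsto> \<tau>)) Y = Some \<tau>' \<longrightarrow>
           ((Vs i)(X := F i n)) Y \<subseteq> ((Vs k)(X := F k n)) Y \<and> ((Vs j)(X := F j n)) Y \<subseteq> ((Vs k)(X := F k n)) Y"
          using k by (intro bexI[where x=k]) auto
      qed
      have u: "\<forall>Y \<tau>'. (\<Theta>(X \<mapsto> \<tau>)) Y = Some \<tau>' \<longrightarrow> (U(X := G n)) Y = (\<Union>i\<in>D. ((Vs i)(X := F i n)) Y)"
      proof (intro allI impI)
        fix Y \<tau>' assume Y: "(\<Theta>(X \<mapsto> \<tau>)) Y = Some \<tau>'"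
        show "(U(X := G n)) Y = (\<Union>i\<in>D. ((Vs i)(X := F i n)) Y)"
        proof (cases "Y = X")
          case True
          then show ?thesis using Suc.IH by simp
        next
          case False
          then have "\<Theta> Y = Some \<tau>'" using Y by simp
          then show ?thesis using False L_nu.prems(3) by simp
        qed
      qed
      show ?thesis using L_nu.IH[OF L_nu.prems(1) d u] .
    qed
    also have "\<dots> = (\<Union>i\<in>D. F i (Suc n))" by (simp add: F_def)
    finally show ?case .
  qed
  then show ?case by (simp add: F_def G_def)
next
  case (L_ex \<Theta> a \<tau> i)
  have eq: "sem I U (N(i := n)) a \<tau> = (\<Union>j\<in>D. sem I (Vs j) (N(i := n)) a \<tau>)" for n
    by (rule L_ex.IH[OF L_ex.prems])
  have "(\<Union>n. sem I U (N(i := n)) a \<tau>) = (\<Union>n. \<Union>j\<in>D. sem I (Vs j) (N(i := n)) a \<tau>)"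
    by (simp only: eq)
  also have "\<dots> = (\<Union>j\<in>D. \<Union>n. sem I (Vs j) (N(i := n)) a \<tau>)" by blast
  finally show ?case by (simp only: sem.simps)
next
  case (L_all \<Theta> a \<tau> i)
  show ?case using L_all.prems(1) by simp
next
  case (L_imp s b \<sigma> a \<tau>)
  have "sem I U N (FImp b a) (TFun \<sigma> \<tau>) = sem I (Vs j) N (FImp b a) (TFun \<sigma> \<tau>)" for j
  proof -
    have "sem I U N b \<sigma> = sem I (Vs j) N b \<sigma>" by (rule sem_const[OF L_imp.hyps(1)])
    moreover have "sem I U N a \<tau> = sem I (Vs j) N a \<tau>" by (rule sem_const[OF L_imp.hyps(2)])
    ultimately show ?thesis by (simp only: sem.simps ty.case)
  qed
  then have "(\<Union>j\<in>D. sem I (Vs j) N (FImp b a) (TFun \<sigma> \<tau>)) = (\<Union>j\<in>D. sem I U N (FImp b a) (TFun \<sigma> \<tau>))"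
    by simp
  also have "\<dots> = sem I U N (FImp b a) (TFun \<sigma> \<tau>)" using ne by simp
  finally show ?case by simp
qed


lemma iter_sub:
  assumes "L s (\<Theta>(X \<mapsto> \<tau>)) a \<tau>" "domain_model I" "valuation I \<Theta> V" "S0 \<subseteq> tdom I \<tau>"
  shows "((\<lambda>S. sem I (V(X := S)) N a \<tau>) ^^ n) S0 \<subseteq> tdom I \<tau>"
proof (induction n)
  case (Suc n)
  have "valuation I (\<Theta>(X \<mapsto> \<tau>)) (V(X := ((\<lambda>S. sem I (V(X := S)) N a \<tau>) ^^ n) S0))"
    using Suc.IH assms(3) unfolding valuation_def by (auto simp del: fun_upd_apply simp: fun_upd_def)
  then show ?case unfolding funpow.simps comp_def by (rule sem_sub[OF assms(1,2)])
qed (use assms(4) in simp)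

lemma valuation_weak: "valuation I \<Theta>' V \<Longrightarrow> \<Theta> \<subseteq>\<^sub>m \<Theta>' \<Longrightarrow> valuation I \<Theta> V"
  unfolding valuation_def map_le_def by (metis domI)

lemma sem_codir:
  fixes Vs :: "'i \<Rightarrow> string \<Rightarrow> 'd set"
  assumes "L s \<Theta> \<phi> \<tau>" and ne: "D \<noteq> {}" and model: "domain_model I"
  shows "s = SMinus \<Longrightarrow> codirv \<Theta> D Vs \<Longrightarrow>
    (\<forall>Y \<tau>'. \<Theta> Y = Some \<tau>' \<longrightarrow> U Y = (\<Inter>i\<in>D. Vs i Y)) \<Longrightarrow>
    (\<forall>i\<in>D. valuation I \<Theta> (Vs i)) \<Longrightarrow>
    sem I U N \<phi> \<tau> = (\<Inter>i\<in>D. sem I (Vs i) N \<phi> \<tau>)"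
  using assms(1)
proof (induction arbitrary: Vs U N rule: L.induct)
  case (L_true s \<Theta> \<tau>)
  then show ?case using ne by simp
next
  case (L_false s \<Theta> \<tau>)
  then show ?case using ne by simp
next
  case (L_or s \<Theta> a \<tau> b)
  have A: "sem I U N a \<tau> = (\<Inter>i\<in>D. sem I (Vs i) N a \<tau>)" by (rule L_or.IH(1)[OF L_or.prems])
  have B: "sem I U N b \<tau> = (\<Inter>i\<in>D. sem I (Vs i) N b \<tau>)" by (rule L_or.IH(2)[OF L_or.prems])
  show ?case
  proof
    show "(\<Inter>i\<in>D. sem I (Vs i) N (FOr a b) \<tau>) \<subseteq> sem I U N (FOr a b) \<tau>"
    proof
      fix x assume x: "x \<in> (\<Inter>i\<in>D. sem I (Vs i) N (FOr a b) \<tau>)"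
      show "x \<in> sem I U N (FOr a b) \<tau>"
      proof (rule ccontr)
        assume "x \<notin> sem I U N (FOr a b) \<tau>"
        then have "x \<notin> (\<Inter>i\<in>D. sem I (Vs i) N a \<tau>)" "x \<notin> (\<Inter>i\<in>D. sem I (Vs i) N b \<tau>)"
          unfolding A[symmetric] B[symmetric] by simp_all
        then obtain i j where ij: "i \<in> D" "j \<in> D" "x \<notin> sem I (Vs i) N a \<tau>" "x \<notin> sem I (Vs j) N b \<tau>"
          by blast
        then obtain k where k: "k \<in> D" "\<forall>Y \<tau>'. \<Theta> Y = Some \<tau>' \<longrightarrow> Vs k Y \<subseteq> Vs i Y \<and> Vs k Y \<subseteq> Vs j Y"
          using L_or.prems(2) unfolding codirv_def by blast
        have "\<forall>Y \<tau>'. \<Theta> Y = Some \<tau>' \<longrightarrow> Vs k Y \<subseteq> Vs i Y" "\<forall>Y \<tau>'. \<Theta> Y = Some \<tau>' \<longrightarrow> Vs k Y \<subseteq> Vs j Y"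
          using k(2) by blast+
        note kk = this
        have m: "sem I (Vs k) N a \<tau> \<subseteq> sem I (Vs i) N a \<tau>" "sem I (Vs k) N b \<tau> \<subseteq> sem I (Vs j) N b \<tau>"
          by (fact sem_mono[OF L_or.hyps(1) kk(1)], fact sem_mono[OF L_or.hyps(2) kk(2)])
        have "x \<in> sem I (Vs k) N (FOr a b) \<tau>" using x k(1) by blast
        then have "x \<in> sem I (Vs k) N a \<tau> \<or> x \<in> sem I (Vs k) N b \<tau>" by simp
        then show False using ij m by blast
      qed
    qed
    show "sem I U N (FOr a b) \<tau> \<subseteq> (\<Inter>i\<in>D. sem I (Vs i) N (FOr a b) \<tau>)"
      unfolding sem.simps A B by blast
  qed
next
  case (L_and s \<Theta> a \<tau> b)
  have A: "sem I U N a \<tau> = (\<Inter>i\<in>D. sem I (Vs i) N a \<tau>)" by (rule L_and.IH(1)[OF L_and.prems])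
  have B: "sem I U N b \<tau> = (\<Inter>i\<in>D. sem I (Vs i) N b \<tau>)" by (rule L_and.IH(2)[OF L_and.prems])
  show ?case by (simp only: sem.simps A B INT_Int_distrib)
next
  case (L_unit s \<Theta>)
  then show ?case using ne by simp
next
  case (L_proj1 s \<Theta> a \<tau>1 \<tau>2)
  show ?case using L_proj1.IH[OF L_proj1.prems] ne by auto
next
  case (L_proj2 s \<Theta> a \<tau>2 \<tau>1)
  show ?case using L_proj2.IH[OF L_proj2.prems] ne by auto
next
  case (L_inj1 s \<Theta> a \<tau>1 \<tau>2)
  have inj: "inj_on (inj_op I 1) (tdom I \<tau>1)" using model unfolding domain_model_def by blast
  have sub: "\<forall>j\<in>D. sem I (Vs j) N a \<tau>1 \<subseteq> tdom I \<tau>1"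
    using sem_sub[OF L_inj1.hyps model] L_inj1.prems(4) by blast
  obtain j0 where "j0 \<in> D" using ne by blast
  have "inj_op I 1 ` (\<Inter>j\<in>D. sem I (Vs j) N a \<tau>1) = (\<Inter>j\<in>D. inj_op I 1 ` sem I (Vs j) N a \<tau>1)"
    by (rule image_INT[OF inj sub \<open>j0 \<in> D\<close>])
  then show ?case using L_inj1.IH[OF L_inj1.prems] by simp
next
  case (L_inj2 s \<Theta> a \<tau>2 \<tau>1)
  have inj: "inj_on (inj_op I 2) (tdom I \<tau>2)" using model unfolding domain_model_def by blast
  have sub: "\<forall>j\<in>D. sem I (Vs j) N a \<tau>2 \<subseteq> tdom I \<tau>2"
    using sem_sub[OF L_inj2.hyps model] L_inj2.prems(4) by blast
  obtain j0 where "j0 \<in> D" using ne by blast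
  have "inj_op I 2 ` (\<Inter>j\<in>D. sem I (Vs j) N a \<tau>2) = (\<Inter>j\<in>D. inj_op I 2 ` sem I (Vs j) N a \<tau>2)"
    by (rule image_INT[OF inj sub \<open>j0 \<in> D\<close>])
  then show ?case using L_inj2.IH[OF L_inj2.prems] by simp
next
  case (L_fold s \<Theta> a \<alpha> \<tau>)
  show ?case using L_fold.IH[OF L_fold.prems] ne by auto
next
  case (L_var \<Theta> X \<tau> s)
  show ?case using L_var.prems L_var.hyps by simp
next
  case (L_weak s \<Theta> a \<tau> \<Theta>')
  have d: "codirv \<Theta> D Vs" using codirv_weak L_weak.prems(2) L_weak.hyps(2) by blast
  have u: "\<forall>Y \<tau>'. \<Theta> Y = Some \<tau>' \<longrightarrow> U Y = (\<Inter>j\<in>D. Vs j Y)"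
  proof (intro allI impI)
    fix Y \<tau>' assume "\<Theta> Y = Some \<tau>'"
    then have "\<Theta>' Y = Some \<tau>'" using L_weak.hyps(2) unfolding map_le_def by (metis domI)
    then show "U Y = (\<Inter>j\<in>D. Vs j Y)" using L_weak.prems(3) by blast
  qed
  have v: "\<forall>j\<in>D. valuation I \<Theta> (Vs j)" using valuation_weak L_weak.prems(4) L_weak.hyps(2) by blast
  show ?case by (rule L_weak.IH[OF L_weak.prems(1) d u v])
next
  case (L_mu s \<Theta> X \<tau> a t)
  define F where "F i n = ((\<lambda>S. sem I ((Vs i)(X := S)) N a \<tau>) ^^ n) {}" for i n
  define G where "G n = ((\<lambda>S. sem I (U(X := S)) N a \<tau>) ^^ n) {}" for n
  have Fm: "F k n \<subseteq> F i n" if "\<forall>Y \<tau>'. \<Theta> Y = Some \<tau>' \<longrightarrow> Vs k Y \<subseteq> Vs i Y" for i k n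
    unfolding F_def
  proof (rule iter_mono_gen)
    fix S T :: "'d set" assume ST: "S \<subseteq> T"
    have "\<forall>Y \<tau>'. (\<Theta>(X \<mapsto> \<tau>)) Y = Some \<tau>' \<longrightarrow> ((Vs k)(X := S)) Y \<subseteq> ((Vs i)(X := T)) Y"
      using that ST by simp
    then show "sem I ((Vs k)(X := S)) N a \<tau> \<subseteq> sem I ((Vs i)(X := T)) N a \<tau>"
      by (rule sem_mono[OF L_mu.hyps])
  qed simp
  have Fs: "F i n \<subseteq> tdom I \<tau>" if "i \<in> D" for i n
    unfolding F_def by (rule iter_sub[OF L_mu.hyps model]) (use that L_mu.prems(4) in auto)
  have "G n = (\<Inter>i\<in>D. F i n)" for n
  proof (induction n)
    case 0
    then show ?case using ne by (simp add: F_def G_def)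
  next
    case (Suc n)
    have "G (Suc n) = sem I (U(X := G n)) N a \<tau>" by (simp add: G_def)
    also have "\<dots> = (\<Inter>i\<in>D. sem I ((Vs i)(X := F i n)) N a \<tau>)"
    proof -
      have d: "codirv (\<Theta>(X \<mapsto> \<tau>)) D (\<lambda>i. (Vs i)(X := F i n))"
        unfolding codirv_def
      proof (intro ballI)
        fix i j assume "i \<in> D" "j \<in> D"
        then obtain k where k: "k \<in> D" "\<forall>Y \<tau>'. \<Theta> Y = Some \<tau>' \<longrightarrow> Vs k Y \<subseteq> Vs i Y \<and> Vs k Y \<subseteq> Vs j Y"
          using L_mu.prems(2) unfolding codirv_def by blast
        have "\<forall>Y \<tau>'. \<Theta> Y = Some \<tau>' \<longrightarrow> Vs k Y \<subseteq> Vs i Y" "\<forall>Y \<tau>'. \<Theta> Y = Some \<tau>' \<longrightarrow> Vs k Y \<subseteq> Vs j Y"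
          using k(2) by blast+
        then have "F k n \<subseteq> F i n" "F k n \<subseteq> F j n" using Fm by blast+
        then show "\<exists>k\<in>D. \<forall>Y \<tau>'. (\<Theta>(X \<mapsto> \<tau>)) Y = Some \<tau>' \<longrightarrow>
           ((Vs k)(X := F k n)) Y \<subseteq> ((Vs i)(X := F i n)) Y \<and> ((Vs k)(X := F k n)) Y \<subseteq> ((Vs j)(X := F j n)) Y"
          using k by (intro bexI[where x=k]) auto
      qed
      have u: "\<forall>Y \<tau>'. (\<Theta>(X \<mapsto> \<tau>)) Y = Some \<tau>' \<longrightarrow> (U(X := G n)) Y = (\<Inter>i\<in>D. ((Vs i)(X := F i n)) Y)"
      proof (intro allI impI)
        fix Y \<tau>' assume Y: "(\<Theta>(X \<mapsto> \<tau>)) Y = Some \<tau>'"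
        show "(U(X := G n)) Y = (\<Inter>i\<in>D. ((Vs i)(X := F i n)) Y)"
        proof (cases "Y = X")
          case True
          then show ?thesis using Suc.IH by simp
        next
          case False
          then have "\<Theta> Y = Some \<tau>'" using Y by simp
          then show ?thesis using False L_mu.prems(3) by simp
        qed
      qed
      have v: "\<forall>i\<in>D. valuation I (\<Theta>(X \<mapsto> \<tau>)) ((Vs i)(X := F i n))"
      proof
        fix i assume i: "i \<in> D"
        have "F i n \<subseteq> tdom I \<tau>" by (rule Fs[OF i])
        then show "valuation I (\<Theta>(X \<mapsto> \<tau>)) ((Vs i)(X := F i n))"
          using L_mu.prems(4) i unfolding valuation_def by auto
      qed
      show ?thesis using L_mu.IH[OF L_mu.prems(1) d u v] .
    qed
    also have "\<dots> = (\<Inter>i\<in>D. F i (Suc n))" by (simp add: F_def)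
    finally show ?case .
  qed
  then show ?case by (simp add: F_def G_def)
next
  case (L_nu s \<Theta> X \<tau> a t)
  define F where "F i n = ((\<lambda>S. sem I ((Vs i)(X := S)) N a \<tau>) ^^ n) (tdom I \<tau>)" for i n
  define G where "G n = ((\<lambda>S. sem I (U(X := S)) N a \<tau>) ^^ n) (tdom I \<tau>)" for n
  have Fm: "F k n \<subseteq> F i n" if "\<forall>Y \<tau>'. \<Theta> Y = Some \<tau>' \<longrightarrow> Vs k Y \<subseteq> Vs i Y" for i k n
    unfolding F_def
  proof (rule iter_mono_gen)
    fix S T :: "'d set" assume ST: "S \<subseteq> T"
    have "\<forall>Y \<tau>'. (\<Theta>(X \<mapsto> \<tau>)) Y = Some \<tau>' \<longrightarrow> ((Vs k)(X := S)) Y \<subseteq> ((Vs i)(X := T)) Y"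
      using that ST by simp
    then show "sem I ((Vs k)(X := S)) N a \<tau> \<subseteq> sem I ((Vs i)(X := T)) N a \<tau>"
      by (rule sem_mono[OF L_nu.hyps])
  qed simp
  have Fs: "F i n \<subseteq> tdom I \<tau>" if "i \<in> D" for i n
    unfolding F_def by (rule iter_sub[OF L_nu.hyps model]) (use that L_nu.prems(4) in auto)
  have "G n = (\<Inter>i\<in>D. F i n)" for n
  proof (induction n)
    case 0
    then show ?case using ne by (simp add: F_def G_def)
  next
    case (Suc n)
    have "G (Suc n) = sem I (U(X := G n)) N a \<tau>" by (simp add: G_def)
    also have "\<dots> = (\<Inter>i\<in>D. sem I ((Vs i)(X := F i n)) N a \<tau>)"
    proof -
      have d: "codirv (\<Theta>(X \<mapsto> \<tau>)) D (\<lambda>i. (Vs i)(X := F i n))"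
        unfolding codirv_def
      proof (intro ballI)
        fix i j assume "i \<in> D" "j \<in> D"
        then obtain k where k: "k \<in> D" "\<forall>Y \<tau>'. \<Theta> Y = Some \<tau>' \<longrightarrow> Vs k Y \<subseteq> Vs i Y \<and> Vs k Y \<subseteq> Vs j Y"
          using L_nu.prems(2) unfolding codirv_def by blast
        have "\<forall>Y \<tau>'. \<Theta> Y = Some \<tau>' \<longrightarrow> Vs k Y \<subseteq> Vs i Y" "\<forall>Y \<tau>'. \<Theta> Y = Some \<tau>' \<longrightarrow> Vs k Y \<subseteq> Vs j Y"
          using k(2) by blast+
        then have "F k n \<subseteq> F i n" "F k n \<subseteq> F j n" using Fm by blast+
        then show "\<exists>k\<in>D. \<forall>Y \<tau>'. (\<Theta>(X \<mapsto> \<tau>)) Y = Some \<tau>' \<longrightarrow>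
           ((Vs k)(X := F k n)) Y \<subseteq> ((Vs i)(X := F i n)) Y \<and> ((Vs k)(X := F k n)) Y \<subseteq> ((Vs j)(X := F j n)) Y"
          using k by (intro bexI[where x=k]) auto
      qed
      have u: "\<forall>Y \<tau>'. (\<Theta>(X \<mapsto> \<tau>)) Y = Some \<tau>' \<longrightarrow> (U(X := G n)) Y = (\<Inter>i\<in>D. ((Vs i)(X := F i n)) Y)"
      proof (intro allI impI)
        fix Y \<tau>' assume Y: "(\<Theta>(X \<mapsto> \<tau>)) Y = Some \<tau>'"
        show "(U(X := G n)) Y = (\<Inter>i\<in>D. ((Vs i)(X := F i n)) Y)"
        proof (cases "Y = X")
          case True
          then show ?thesis using Suc.IH by simp
        next
          case False
          then have "\<Theta> Y = Some \<tau>'" using Y by simp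
          then show ?thesis using False L_nu.prems(3) by simp
        qed
      qed
      have v: "\<forall>i\<in>D. valuation I (\<Theta>(X \<mapsto> \<tau>)) ((Vs i)(X := F i n))"
      proof
        fix i assume i: "i \<in> D"
        have "F i n \<subseteq> tdom I \<tau>" by (rule Fs[OF i])
        then show "valuation I (\<Theta>(X \<mapsto> \<tau>)) ((Vs i)(X := F i n))"
          using L_nu.prems(4) i unfolding valuation_def by auto
      qed
      show ?thesis using L_nu.IH[OF L_nu.prems(1) d u v] .
    qed
    also have "\<dots> = (\<Inter>i\<in>D. F i (Suc n))" by (simp add: F_def)
    finally show ?case .
  qed
  then show ?case by (simp add: F_def G_def)
next
  case (L_ex \<Theta> a \<tau> i)
  show ?case using L_ex.prems(1) by simp
next
  case (L_all \<Theta> a \<tau> i)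
  have eq: "sem I U (N(i := n)) a \<tau> = (\<Inter>j\<in>D. sem I (Vs j) (N(i := n)) a \<tau>)" for n
    by (rule L_all.IH[OF L_all.prems])
  have "(\<Inter>n. sem I U (N(i := n)) a \<tau>) = (\<Inter>n. \<Inter>j\<in>D. sem I (Vs j) (N(i := n)) a \<tau>)"
    by (simp only: eq)
  also have "\<dots> = (\<Inter>j\<in>D. \<Inter>n. sem I (Vs j) (N(i := n)) a \<tau>)" by blast
  finally show ?case by (simp only: sem.simps)
next
  case (L_imp s b \<sigma> a \<tau>)
  have "sem I U N (FImp b a) (TFun \<sigma> \<tau>) = sem I (Vs j) N (FImp b a) (TFun \<sigma> \<tau>)" for j
  proof -
    have "sem I U N b \<sigma> = sem I (Vs j) N b \<sigma>" by (rule sem_const[OF L_imp.hyps(1)])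
    moreover have "sem I U N a \<tau> = sem I (Vs j) N a \<tau>" by (rule sem_const[OF L_imp.hyps(2)])
    ultimately show ?thesis by (simp only: sem.simps ty.case)
  qed
  then have "(\<Inter>j\<in>D. sem I (Vs j) N (FImp b a) (TFun \<sigma> \<tau>)) = (\<Inter>j\<in>D. sem I U N (FImp b a) (TFun \<sigma> \<tau>))"
    by simp
  also have "\<dots> = sem I U N (FImp b a) (TFun \<sigma> \<tau>)" using ne by simp
  finally show ?case by simp
qed


theorem proposition5p6:
  fixes I :: "'d ty_interp" and V :: "string \<Rightarrow> 'd set" and N :: "string \<Rightarrow> nat"
    and \<Theta> :: fctx and X :: string and \<sigma> \<tau> :: ty and \<phi> :: form and s :: sgn
  assumes model: "domain_model I"
    and ctx_closed: "\<forall>Y \<sigma>'. \<Theta> Y = Some \<sigma>' \<longrightarrow> closed_ty \<sigma>'"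
    and tau_closed: "closed_ty \<tau>"
    and val: "valuation I \<Theta> V"
    and X_in: "\<Theta> X = Some \<sigma>"
    and typed: "L s \<Theta> \<phi> \<tau>"
  shows "(\<forall>S T. S \<subseteq> T \<longrightarrow> T \<subseteq> tdom I \<sigma> \<longrightarrow>
             sem I (V(X := S)) N \<phi> \<tau> \<subseteq> sem I (V(X := T)) N \<phi> \<tau>)
       \<and> (s = SPlus \<longrightarrow> (\<forall>D. directed_family D \<longrightarrow> D \<subseteq> Pow (tdom I \<sigma>) \<longrightarrow>
             sem I (V(X := \<Union>D)) N \<phi> \<tau> = (\<Union>S\<in>D. sem I (V(X := S)) N \<phi> \<tau>)))
       \<and> (s = SMinus \<longrightarrow> (\<forall>D. codirected_family D \<longrightarrow> D \<subseteq> Pow (tdom I \<sigma>) \<longrightarrow>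
             sem I (V(X := \<Inter>D)) N \<phi> \<tau> = (\<Inter>S\<in>D. sem I (V(X := S)) N \<phi> \<tau>)))"
proof (intro conjI allI impI)
  fix S T assume ST: "S \<subseteq> T" and "T \<subseteq> tdom I \<sigma>"
  have "\<forall>Y \<tau>'. \<Theta> Y = Some \<tau>' \<longrightarrow> (V(X := S)) Y \<subseteq> (V(X := T)) Y" using ST by simp
  then show "sem I (V(X := S)) N \<phi> \<tau> \<subseteq> sem I (V(X := T)) N \<phi> \<tau>"
    by (rule sem_mono[OF typed])
next
  fix D :: "'d set set"
  assume sp: "s = SPlus" and dir: "directed_family D" and DP: "D \<subseteq> Pow (tdom I \<sigma>)"
  have ne: "D \<noteq> {}" using dir unfolding directed_family_def by blast
  have d: "dirv \<Theta> D (\<lambda>S. V(X := S))"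
    unfolding dirv_def
  proof (intro ballI)
    fix A B assume "A \<in> D" "B \<in> D"
    then obtain C where "C \<in> D" "A \<subseteq> C" "B \<subseteq> C" using dir unfolding directed_family_def by blast
    then show "\<exists>C\<in>D. \<forall>Y \<tau>'. \<Theta> Y = Some \<tau>' \<longrightarrow>
        (V(X := A)) Y \<subseteq> (V(X := C)) Y \<and> (V(X := B)) Y \<subseteq> (V(X := C)) Y"
      by (intro bexI[where x=C]) auto
  qed
  have u: "\<forall>Y \<tau>'. \<Theta> Y = Some \<tau>' \<longrightarrow> (V(X := \<Union>D)) Y = (\<Union>S\<in>D. (V(X := S)) Y)"
    using ne by auto
  show "sem I (V(X := \<Union>D)) N \<phi> \<tau> = (\<Union>S\<in>D. sem I (V(X := S)) N \<phi> \<tau>)"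
    by (rule sem_dir[OF typed ne sp d u])
next
  fix D :: "'d set set"
  assume sm: "s = SMinus" and dir: "codirected_family D" and DP: "D \<subseteq> Pow (tdom I \<sigma>)"
  have ne: "D \<noteq> {}" using dir unfolding codirected_family_def by blast
  have d: "codirv \<Theta> D (\<lambda>S. V(X := S))"
    unfolding codirv_def
  proof (intro ballI)
    fix A B assume "A \<in> D" "B \<in> D"
    then obtain C where "C \<in> D" "C \<subseteq> A" "C \<subseteq> B" using dir unfolding codirected_family_def by blast
    then show "\<exists>C\<in>D. \<forall>Y \<tau>'. \<Theta> Y = Some \<tau>' \<longrightarrow>
        (V(X := C)) Y \<subseteq> (V(X := A)) Y \<and> (V(X := C)) Y \<subseteq> (V(X := B)) Y"
      by (intro bexI[where x=C]) auto
  qed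
  have u: "\<forall>Y \<tau>'. \<Theta> Y = Some \<tau>' \<longrightarrow> (V(X := \<Inter>D)) Y = (\<Inter>S\<in>D. (V(X := S)) Y)"
    using ne by auto
  have v: "\<forall>S\<in>D. valuation I \<Theta> (V(X := S))"
    using val DP X_in unfolding valuation_def by auto
  show "sem I (V(X := \<Inter>D)) N \<phi> \<tau> = (\<Inter>S\<in>D. sem I (V(X := S)) N \<phi> \<tau>)"
    by (rule sem_codir[OF typed ne model sm d u v])
qed

end
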